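(* Under the hypotheses of the following setting: $K=\begin{bmatrix} A & B^T\\ B & -C\end{bmatrix}$ with $A\in\mathbb{R}^{m\times m}$ symmetric positive definite, $B\in\mathbb{R}^{n\times m}$ of rank $n$, $C\in\mathbb{R}^{n\times n}$ symmetric positive semidefinite, $K=LJ_{m+n}L^T$ a generalized Cholesky factorization, and $\Delta K$ symmetric with $\|L^{-1}\|_2^2\|\Delta K\|_F<\tfrac12$, there is a generalized Cholesky factorization $K+\Delta K=(L+\Delta L)J_{m+n}(L+\Delta L)^T$ such that $$\|L^{-1}\Delta L\|_F\le \frac{1}{\sqrt2}\left(1-\sqrt{1-2\|L^{-1}\|_2^2\|\Delta K\|_F}\right).$$
   Context: $J_{m+n}=\begin{bmatrix} I_m&0\\0&-I_n\end{bmatrix}$. A generalized Cholesky factorization of $M\in\mathbb{R}^{(m+n)\times(m+n)}$ is $M=LJ_{m+n}L^T$ with $L=\begin{bmatrix}L_{11}&0\\L_{21}&L_{22}\end{bmatrix}$, $L_{11}\in\mathbb{R}^{m\times m}$, $L_{22}\in\mathbb{R}^{n\times n}$ nonsingular lower triangular, $L_{21}\in\mathbb{R}^{n\times m}$. $\|\cdot\|_2$ is the spectral norm and $\|\cdot\|_F$ the Frobenius norm. *)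

theory Defs
  imports "HOL-Analysis.Analysis" "Jordan_Normal_Form.DL_Rank" "Jordan_Normal_Form.Matrix"
begin

definition Jsig :: "nat \<Rightarrow> nat \<Rightarrow> real mat" where
  "Jsig m n = four_block_mat (1\<^sub>m m) (0\<^sub>m m n) (0\<^sub>m n m) (- (1\<^sub>m n))"

definition lower_tri :: "real mat \<Rightarrow> bool" where
  "lower_tri A \<longleftrightarrow> (\<forall>i < dim_row A. \<forall>j < dim_col A. i < j \<longrightarrow> A $$ (i,j) = 0)"

definition sym_mat :: "real mat \<Rightarrow> bool" where
  "sym_mat A \<longleftrightarrow> square_mat A \<and> transpose_mat A = A"

definition pos_def_mat :: "real mat \<Rightarrow> bool" where
  "pos_def_mat A \<longleftrightarrow> sym_mat A \<and>
     (\<forall>x \<in> carrier_vec (dim_row A). x \<noteq> 0\<^sub>v (dim_row A) \<longrightarrow> x \<bullet> (A *\<^sub>v x) > 0)"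

definition pos_semidef_mat :: "real mat \<Rightarrow> bool" where
  "pos_semidef_mat A \<longleftrightarrow> sym_mat A \<and>
     (\<forall>x \<in> carrier_vec (dim_row A). x \<bullet> (A *\<^sub>v x) \<ge> 0)"

definition mat_rank :: "real mat \<Rightarrow> nat" where
  "mat_rank A = vec_space.rank (dim_row A) A"

definition mat_inv :: "real mat \<Rightarrow> real mat" where
  "mat_inv A = (SOME B. B \<in> carrier_mat (dim_row A) (dim_row A) \<and>
                   A * B = 1\<^sub>m (dim_row A) \<and> B * A = 1\<^sub>m (dim_row A))"

definition vnorm2 :: "real vec \<Rightarrow> real" where
  "vnorm2 x = sqrt (x \<bullet> x)"

definition spec_norm :: "real mat \<Rightarrow> real" where
  "spec_norm A = Sup {vnorm2 (A *\<^sub>v x) | x. x \<in> carrier_vec (dim_col A) \<and> vnorm2 x = 1}"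

definition frob_norm :: "real mat \<Rightarrow> real" where
  "frob_norm A = sqrt (\<Sum>i<dim_row A. \<Sum>j<dim_col A. (A $$ (i,j))\<^sup>2)"

definition gen_cholesky :: "nat \<Rightarrow> nat \<Rightarrow> real mat \<Rightarrow> real mat \<Rightarrow> bool" where
  "gen_cholesky m n M L \<longleftrightarrow>
     L \<in> carrier_mat (m+n) (m+n) \<and> lower_tri L \<and>
     invertible_mat (mat m m (\<lambda>(i,j). L $$ (i,j))) \<and>
     invertible_mat (mat n n (\<lambda>(i,j). L $$ (m+i, m+j))) \<and>
     M = L * Jsig m n * transpose_mat L"

end

theory Submission imports Defs begin

declare minus_carrier_mat[simp] uminus_carrier_mat[simp]

definition jd :: "nat \<Rightarrow> nat \<Rightarrow> real" where "jd m k = (if k < m then 1 else -1)"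
lemma jd_sq[simp]: "jd m k * jd m k = 1" by (simp add: jd_def)
lemma jd_sq2[simp]: "(jd m k)\<^sup>2 = 1" by (simp add: jd_def)
lemma jd_abs[simp]: "\<bar>jd m k\<bar> = 1" by (simp add: jd_def)

lemma Jsig_carrier[simp]: "Jsig m n \<in> carrier_mat (m+n) (m+n)" by (simp add: Jsig_def)
lemma Jsig_dim[simp]: "dim_row (Jsig m n) = m+n" "dim_col (Jsig m n) = m+n" by (simp_all add: Jsig_def)
lemma Jsig_index: "i < m+n \<Longrightarrow> j < m+n \<Longrightarrow> Jsig m n $$ (i,j) = (if i = j then jd m i else 0)"
  by (auto simp: Jsig_def jd_def)

lemma frob_L2: "frob_norm A = L2_set (\<lambda>p. A $$ p) ({..<dim_row A} \<times> {..<dim_col A})"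
  unfolding frob_norm_def L2_set_def by (simp add: sum.cartesian_product case_prod_beta)

lemma frob_nonneg[simp]: "0 \<le> frob_norm A" by (simp add: frob_norm_def sum_nonneg)

lemma frob_entry: assumes "i < dim_row A" "j < dim_col A" shows "\<bar>A $$ (i,j)\<bar> \<le> frob_norm A"
proof -
  have "(A $$ (i,j))\<^sup>2 \<le> (\<Sum>p\<in>{..<dim_row A} \<times> {..<dim_col A}. (A $$ p)\<^sup>2)"
    by (rule member_le_sum[where f="\<lambda>p. (A $$ p)\<^sup>2"]) (use assms in auto)
  hence "sqrt ((A $$ (i,j))\<^sup>2) \<le> frob_norm A" unfolding frob_L2 L2_set_def
    using real_sqrt_le_mono by blast
  thus ?thesis by simp
qed

lemma frob_add: assumes "A \<in> carrier_mat r c" "B \<in> carrier_mat r c"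
  shows "frob_norm (A + B) \<le> frob_norm A + frob_norm B"
proof -
  have "frob_norm (A + B) = L2_set (\<lambda>p. A $$ p + B $$ p) ({..<r} \<times> {..<c})"
    unfolding frob_L2 using assms by (intro L2_set_cong) auto
  also have "\<dots> \<le> frob_norm A + frob_norm B" unfolding frob_L2 using assms
    by (simp add: L2_set_triangle_ineq)
  finally show ?thesis .
qed

lemma frob_minus_comm: assumes "A \<in> carrier_mat r c" "B \<in> carrier_mat r c"
  shows "frob_norm (A - B) = frob_norm (B - A)"
  unfolding frob_norm_def using assms by (auto intro!: sum.cong arg_cong[where f=sqrt] simp: power2_commute)

definition Qm :: "nat \<Rightarrow> nat \<Rightarrow> real mat \<Rightarrow> real mat \<Rightarrow> real mat" where
 "Qm N m X Y = mat N N (\<lambda>(i,j). \<Sum>k<N. X$$(i,k) * jd m k * Y$$(j,k))"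

lemma Qm_carrier[simp]: "Qm N m X Y \<in> carrier_mat N N" by (simp add: Qm_def)
lemma Qm_dim[simp]: "dim_row (Qm N m X Y) = N" "dim_col (Qm N m X Y) = N" by (simp_all add: Qm_def)

lemma frob_Qm: assumes X: "X \<in> carrier_mat N N" and Y: "Y \<in> carrier_mat N N"
  shows "frob_norm (Qm N m X Y) \<le> frob_norm X * frob_norm Y"
proof -
  define rX where "rX i = (\<Sum>k<N. (X$$(i,k))\<^sup>2)" for i
  define rY where "rY i = (\<Sum>k<N. (Y$$(i,k))\<^sup>2)" for i
  have ent: "(\<Sum>k<N. X$$(i,k) * jd m k * Y$$(j,k))\<^sup>2 \<le> rX i * rY j" for i j
  proof -
    have "\<bar>\<Sum>k<N. X$$(i,k) * jd m k * Y$$(j,k)\<bar> \<le> (\<Sum>k<N. \<bar>X$$(i,k)\<bar> * \<bar>Y$$(j,k)\<bar>)"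
      by (rule order_trans[OF sum_abs]) (simp add: abs_mult)
    also have "\<dots> \<le> L2_set (\<lambda>k. X$$(i,k)) {..<N} * L2_set (\<lambda>k. Y$$(j,k)) {..<N}"
      by (rule L2_set_mult_ineq)
    finally have h: "\<bar>\<Sum>k<N. X$$(i,k) * jd m k * Y$$(j,k)\<bar> \<le> L2_set (\<lambda>k. X$$(i,k)) {..<N} * L2_set (\<lambda>k. Y$$(j,k)) {..<N}" .
    have "(\<Sum>k<N. X$$(i,k) * jd m k * Y$$(j,k))\<^sup>2 \<le> (L2_set (\<lambda>k. X$$(i,k)) {..<N} * L2_set (\<lambda>k. Y$$(j,k)) {..<N})\<^sup>2"
      using power_mono[OF h abs_ge_zero, of 2] by simp
    also have "\<dots> = rX i * rY j" unfolding rX_def rY_def L2_set_def power_mult_distrib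
      by (simp add: sum_nonneg)
    finally show ?thesis .
  qed
  have "(\<Sum>i<N. \<Sum>j<N. (Qm N m X Y $$ (i,j))\<^sup>2) \<le> (\<Sum>i<N. \<Sum>j<N. rX i * rY j)"
    by (intro sum_mono) (simp add: Qm_def ent)
  also have "\<dots> = (\<Sum>i<N. rX i) * (\<Sum>j<N. rY j)" by (simp add: sum_product)
  finally have le: "(\<Sum>i<N. \<Sum>j<N. (Qm N m X Y $$ (i,j))\<^sup>2) \<le> (\<Sum>i<N. rX i) * (\<Sum>j<N. rY j)" .
  have fX: "frob_norm X = sqrt (\<Sum>i<N. rX i)" using X by (simp add: frob_norm_def rX_def)
  have fY: "frob_norm Y = sqrt (\<Sum>i<N. rY i)" using Y by (simp add: frob_norm_def rY_def)
  have fQ: "frob_norm (Qm N m X Y) = sqrt (\<Sum>i<N. \<Sum>j<N. (Qm N m X Y $$ (i,j))\<^sup>2)"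
    unfolding frob_norm_def by (simp add: Qm_def)
  have "sqrt (\<Sum>i<N. \<Sum>j<N. (Qm N m X Y $$ (i,j))\<^sup>2) \<le> sqrt ((\<Sum>i<N. rX i) * (\<Sum>j<N. rY j))"
    using le by (rule real_sqrt_le_mono)
  also have "\<dots> = sqrt (\<Sum>i<N. rX i) * sqrt (\<Sum>j<N. rY j)" by (rule real_sqrt_mult)
  finally show ?thesis unfolding fX fY fQ .
qed

definition lowm :: "nat \<Rightarrow> real mat \<Rightarrow> real mat" where
 "lowm N S = mat N N (\<lambda>(i,j). if j < i then S$$(i,j) else if i = j then S$$(i,j)/2 else 0)"

lemma lowm_carrier[simp]: "lowm N S \<in> carrier_mat N N" by (simp add: lowm_def)
lemma lowm_dim[simp]: "dim_row (lowm N S) = N" "dim_col (lowm N S) = N" by (simp_all add: lowm_def)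

lemma frob_lowm: assumes S: "S \<in> carrier_mat N N" and sym: "\<And>i j. i < N \<Longrightarrow> j < N \<Longrightarrow> S$$(i,j) = S$$(j,i)"
  shows "sqrt 2 * frob_norm (lowm N S) \<le> frob_norm S"
proof -
  define g where "g i j = (if j < i then S$$(i,j) else if i = j then S$$(i,j)/2 else 0)\<^sup>2" for i j
  have sw: "(\<Sum>i<N. \<Sum>j<N. g i j) = (\<Sum>i<N. \<Sum>j<N. g j i)" by (rule sum.swap)
  have "2 * (\<Sum>i<N. \<Sum>j<N. g i j) = (\<Sum>i<N. \<Sum>j<N. g i j + g j i)"
    by (simp add: sum.distrib sw[symmetric])
  also have "\<dots> \<le> (\<Sum>i<N. \<Sum>j<N. (S$$(i,j))\<^sup>2)"
  proof (intro sum_mono)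
    fix i j assume "i \<in> {..<N}" "j \<in> {..<N}"
    then have e: "S$$(i,j) = S$$(j,i)" using sym by auto
    show "g i j + g j i \<le> (S$$(i,j))\<^sup>2"
    proof (cases "j < i")
      case True thus ?thesis by (simp add: g_def)
    next
      case False
      show ?thesis
      proof (cases "i = j")
        case True thus ?thesis by (simp add: g_def power_divide)
      next
        case False
        with \<open>\<not> j < i\<close> have "i < j" by simp
        thus ?thesis by (simp add: g_def e)
      qed
    qed
  qed
  finally have le: "2 * (\<Sum>i<N. \<Sum>j<N. g i j) \<le> (\<Sum>i<N. \<Sum>j<N. (S$$(i,j))\<^sup>2)" .
  have "frob_norm (lowm N S) = sqrt (\<Sum>i<N. \<Sum>j<N. g i j)" unfolding frob_norm_def by (simp add: lowm_def g_def)
  hence "sqrt 2 * frob_norm (lowm N S) = sqrt (2 * (\<Sum>i<N. \<Sum>j<N. g i j))" by (simp add: real_sqrt_mult)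
  also have "\<dots> \<le> frob_norm S" unfolding frob_norm_def using S le by (simp add: real_sqrt_le_mono)
  finally show ?thesis .
qed


lemma frob_uminus: "frob_norm (- A) = frob_norm A"
  unfolding frob_norm_def by simp

lemma frob_diff: assumes "A \<in> carrier_mat r c" "B \<in> carrier_mat r c"
  shows "frob_norm (A - B) \<le> frob_norm A + frob_norm B"
proof -
  have "A - B = A + (- B)" using assms by (intro eq_matI) auto
  hence "frob_norm (A - B) \<le> frob_norm A + frob_norm (- B)"
    using frob_add[of A r c "- B"] assms by simp
  thus ?thesis by (simp add: frob_uminus)
qed

lemma Qm_sym: "i < N \<Longrightarrow> j < N \<Longrightarrow> Qm N m X X $$ (i,j) = Qm N m X X $$ (j,i)"
  unfolding Qm_def by (auto intro!: sum.cong simp: mult_ac)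

lemma Qm_diff: assumes "X \<in> carrier_mat N N" "Y \<in> carrier_mat N N"
  shows "Qm N m Y Y - Qm N m X X = Qm N m Y (Y - X) + Qm N m (Y - X) X"
proof (rule eq_matI)
  fix i j assume ij: "i < dim_row (Qm N m Y (Y - X) + Qm N m (Y - X) X)" "j < dim_col (Qm N m Y (Y - X) + Qm N m (Y - X) X)"
  hence ij': "i < N" "j < N" by auto
  have "(\<Sum>k<N. Y $$ (i, k) * jd m k * Y $$ (j, k)) - (\<Sum>k<N. X $$ (i, k) * jd m k * X $$ (j, k))
     = (\<Sum>k<N. Y $$ (i, k) * jd m k * (Y $$ (j, k) - X $$ (j,k))) + (\<Sum>k<N. (Y $$ (i, k) - X $$ (i,k)) * jd m k * X $$ (j, k))"
    by (simp add: sum_subtractf[symmetric] sum.distrib[symmetric] algebra_simps)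
  thus "(Qm N m Y Y - Qm N m X X) $$ (i, j) = (Qm N m Y (Y - X) + Qm N m (Y - X) X) $$ (i, j)"
    using ij' assms by (simp add: Qm_def)
qed auto

locale fpset =
  fixes N m :: nat and E :: "real mat" and \<epsilon> :: real
  assumes E: "E \<in> carrier_mat N N"
    and Esym: "\<And>i j. i < N \<Longrightarrow> j < N \<Longrightarrow> E $$ (i,j) = E $$ (j,i)"
    and Eb: "frob_norm E \<le> \<epsilon>" and eps: "\<epsilon> < 1/2"
begin

definition "\<rho> = (1 - sqrt (1 - 2*\<epsilon>)) / sqrt 2"
definition "Phi X = lowm N (E - Qm N m X X)"

lemma eps0: "0 \<le> \<epsilon>" using Eb frob_nonneg[of E] by linarith

lemma rho_facts: "0 \<le> \<rho>" "\<epsilon> + \<rho>\<^sup>2 = sqrt 2 * \<rho>" "sqrt 2 * \<rho> < 1"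
proof -
  define t where "t = sqrt (1 - 2*\<epsilon>)"
  have t2: "t\<^sup>2 = 1 - 2*\<epsilon>" using eps by (simp add: t_def)
  have t0: "0 < t" using eps by (simp add: t_def)
  have t1: "t \<le> 1" using eps0 by (simp add: t_def)
  have r: "\<rho> = (1 - t) / sqrt 2" by (simp add: \<rho>_def t_def)
  have s2: "sqrt 2 * sqrt 2 = (2::real)" by simp
  show "0 \<le> \<rho>" using t1 by (simp add: r)
  have "sqrt 2 * \<rho> = 1 - t" by (simp add: r)
  moreover have "\<rho>\<^sup>2 = (1 - t)\<^sup>2 / 2" by (simp add: r power_divide)
  ultimately show "\<epsilon> + \<rho>\<^sup>2 = sqrt 2 * \<rho>" using t2 by (simp add: power2_eq_square algebra_simps)
  show "sqrt 2 * \<rho> < 1" using t0 by (simp add: r)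
qed

lemma Phi_carrier[simp]: "Phi X \<in> carrier_mat N N" by (simp add: Phi_def)
lemma Phi_dim[simp]: "dim_row (Phi X) = N" "dim_col (Phi X) = N" by (simp_all add: Phi_def)

lemma Phi_frob: assumes X: "X \<in> carrier_mat N N" and b: "frob_norm X \<le> \<rho>"
  shows "frob_norm (Phi X) \<le> \<rho>"
proof -
  have sym: "(E - Qm N m X X) $$ (i,j) = (E - Qm N m X X) $$ (j,i)" if "i < N" "j < N" for i j
    using that E Esym[OF that] Qm_sym[OF that, of m X] by simp
  have "sqrt 2 * frob_norm (Phi X) \<le> frob_norm (E - Qm N m X X)"
    unfolding Phi_def by (rule frob_lowm) (use E sym in auto)
  also have "\<dots> \<le> frob_norm E + frob_norm (Qm N m X X)" by (rule frob_diff) (use E in auto)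
  also have "\<dots> \<le> \<epsilon> + \<rho> * \<rho>"
    using Eb frob_Qm[OF X X, of m] mult_mono[OF b b] rho_facts(1) by force
  also have "\<dots> = sqrt 2 * \<rho>" using rho_facts(2) by (simp add: power2_eq_square)
  finally show ?thesis by simp
qed

lemma Phi_contr: assumes X: "X \<in> carrier_mat N N" and bX: "frob_norm X \<le> \<rho>"
  and Y: "Y \<in> carrier_mat N N" and bY: "frob_norm Y \<le> \<rho>"
  shows "frob_norm (Phi X - Phi Y) \<le> (sqrt 2 * \<rho>) * frob_norm (X - Y)"
proof -
  let ?D = "Qm N m Y Y - Qm N m X X"
  have eq: "Phi X - Phi Y = lowm N ?D"
    by (rule eq_matI) (use E in \<open>auto simp: Phi_def lowm_def field_simps\<close>)
  have sym: "?D $$ (i,j) = ?D $$ (j,i)" if "i < N" "j < N" for i j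
    using that Qm_sym[OF that, of m X] Qm_sym[OF that, of m Y] by simp
  have YX: "Y - X \<in> carrier_mat N N" using X Y by simp
  have "sqrt 2 * frob_norm (Phi X - Phi Y) \<le> frob_norm ?D"
    unfolding eq by (rule frob_lowm) (use sym in auto)
  also have "?D = Qm N m Y (Y - X) + Qm N m (Y - X) X" by (rule Qm_diff[OF X Y])
  also have "frob_norm \<dots> \<le> frob_norm (Qm N m Y (Y - X)) + frob_norm (Qm N m (Y - X) X)"
    by (rule frob_add) auto
  also have "\<dots> \<le> frob_norm Y * frob_norm (Y - X) + frob_norm (Y - X) * frob_norm X"
    using frob_Qm[OF Y YX, of m] frob_Qm[OF YX X, of m] by linarith
  also have "\<dots> \<le> \<rho> * frob_norm (Y - X) + frob_norm (Y - X) * \<rho>"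
    using bX bY by (intro add_mono mult_left_mono mult_right_mono) auto
  also have "frob_norm (Y - X) = frob_norm (X - Y)" by (rule frob_minus_comm[OF Y X])
  finally have h: "sqrt 2 * frob_norm (Phi X - Phi Y) \<le> 2 * \<rho> * frob_norm (X - Y)" by simp
  have "2 * \<rho> * frob_norm (X - Y) = sqrt 2 * (sqrt 2 * \<rho> * frob_norm (X - Y))"
    by (simp add: mult.assoc[symmetric])
  with h have "sqrt 2 * frob_norm (Phi X - Phi Y) \<le> sqrt 2 * (sqrt 2 * \<rho> * frob_norm (X - Y))" by simp
  thus ?thesis by simp
qed

definition "Xs k = (Phi ^^ k) (0\<^sub>m N N)"
definition "cc = sqrt 2 * \<rho>"

lemma cc: "0 \<le> cc" "cc < 1" unfolding cc_def using rho_facts(1,3) by simp_all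

lemma Xs_0: "Xs 0 = 0\<^sub>m N N" unfolding Xs_def by simp
lemma Xs_Suc: "Xs (Suc k) = Phi (Xs k)" unfolding Xs_def by simp
lemma Xs_carrier[simp]: "Xs k \<in> carrier_mat N N"
  by (cases k) (simp_all only: Xs_0 Xs_Suc zero_carrier_mat Phi_carrier)
lemma Xs_dim[simp]: "dim_row (Xs k) = N" "dim_col (Xs k) = N"
  using Xs_carrier[of k] unfolding carrier_mat_def by simp_all

lemma Xs_frob: "frob_norm (Xs k) \<le> \<rho>"
proof (induction k)
  case 0 thus ?case using rho_facts(1) by (simp add: Xs_0 frob_norm_def)
next
  case (Suc k) thus ?case by (simp add: Xs_Suc Phi_frob)
qed

lemma Xs_diff: "frob_norm (Xs (Suc k) - Xs k) \<le> cc ^ k * \<rho>"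
proof (induction k)
  case 0
  have "frob_norm (Xs (Suc 0) - Xs 0) = frob_norm (Xs (Suc 0))"
    unfolding frob_norm_def by (simp add: Xs_0)
  thus ?case using Xs_frob[of "Suc 0"] by simp
next
  case (Suc k)
  have "frob_norm (Xs (Suc (Suc k)) - Xs (Suc k)) \<le> cc * frob_norm (Xs (Suc k) - Xs k)"
    unfolding Xs_Suc[of "Suc k"] Xs_Suc[of k] cc_def
    by (rule Phi_contr) (auto simp: Xs_frob Xs_Suc[symmetric])
  also have "\<dots> \<le> cc * (cc ^ k * \<rho>)" using Suc cc by (intro mult_left_mono) auto
  finally show ?case by (simp add: mult.assoc)
qed

definition "dd t i j = Xs (Suc t) $$ (i,j) - Xs t $$ (i,j)"

lemma dd_bound: assumes "i < N" "j < N" shows "norm (dd t i j) \<le> cc ^ t * \<rho>"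
proof -
  have e: "(Xs (Suc t) - Xs t) $$ (i,j) = dd t i j"
    unfolding dd_def by (rule index_minus_mat(1)) (use assms in auto)
  have "\<bar>(Xs (Suc t) - Xs t) $$ (i,j)\<bar> \<le> frob_norm (Xs (Suc t) - Xs t)"
    by (rule frob_entry) (use assms in auto)
  hence "\<bar>dd t i j\<bar> \<le> frob_norm (Xs (Suc t) - Xs t)" unfolding e .
  also have "\<dots> \<le> cc ^ t * \<rho>" by (rule Xs_diff)
  finally show ?thesis by simp
qed

lemma Xs_tel: assumes "i < N" "j < N" shows "Xs k $$ (i,j) = (\<Sum>t<k. dd t i j)"
proof (induction k)
  case 0 show ?case using assms by (simp add: Xs_0)
next
  case (Suc k)
  have "Xs (Suc k) $$ (i,j) = Xs k $$ (i,j) + dd k i j" unfolding dd_def by simp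
  also have "\<dots> = (\<Sum>t<k. dd t i j) + dd k i j" unfolding Suc.IH ..
  finally show ?case by simp
qed

lemma dd_summable: assumes "i < N" "j < N" shows "summable (\<lambda>t. dd t i j)"
proof (rule summable_comparison_test)
  show "\<exists>N'. \<forall>t\<ge>N'. norm (dd t i j) \<le> cc ^ t * \<rho>" using dd_bound[OF assms] by blast
  show "summable (\<lambda>t. cc ^ t * \<rho>)" using cc by (intro summable_mult2 summable_geometric) auto
qed

definition "Xlim = mat N N (\<lambda>(i,j). suminf (\<lambda>t. dd t i j))"

lemma Xlim_carrier[simp]: "Xlim \<in> carrier_mat N N" by (simp add: Xlim_def)
lemma Xlim_dim[simp]: "dim_row Xlim = N" "dim_col Xlim = N" by (simp_all add: Xlim_def)

lemma Xs_lim: assumes "i < N" "j < N" shows "(\<lambda>k. Xs k $$ (i,j)) \<longlonglongrightarrow> Xlim $$ (i,j)"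
  using summable_LIMSEQ[OF dd_summable[OF assms]] assms by (simp add: Xs_tel Xlim_def)

lemma Phi_index: assumes "i < N" "j < N"
  shows "Phi X $$ (i,j) = (if j < i then E $$ (i,j) - (\<Sum>k<N. X$$(i,k) * jd m k * X$$(j,k))
            else if i = j then (E $$ (i,j) - (\<Sum>k<N. X$$(i,k) * jd m k * X$$(j,k))) / 2 else 0)"
proof -
  have a: "(E - Qm N m X X) $$ (i,j) = E $$ (i,j) - (\<Sum>k<N. X$$(i,k) * jd m k * X$$(j,k))"
    using assms by (simp add: Qm_def)
  have "Phi X $$ (i,j) = (if j < i then (E - Qm N m X X) $$ (i,j) else if i = j then (E - Qm N m X X) $$ (i,j)/2 else 0)"
    unfolding Phi_def lowm_def using assms by simp
  thus ?thesis unfolding a .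
qed

lemma Xlim_fix: "Phi Xlim = Xlim"
proof (rule eq_matI)
  fix i j assume "i < dim_row Xlim" "j < dim_col Xlim"
  hence ij: "i < N" "j < N" by auto
  have S: "(\<lambda>k. \<Sum>l<N. Xs k $$(i,l) * jd m l * Xs k $$(j,l)) \<longlonglongrightarrow> (\<Sum>l<N. Xlim $$(i,l) * jd m l * Xlim $$(j,l))"
    using ij by (intro tendsto_sum tendsto_mult tendsto_const Xs_lim) auto
  have L1: "(\<lambda>k. Phi (Xs k) $$ (i,j)) \<longlonglongrightarrow> Phi Xlim $$ (i,j)"
  proof (cases "j < i")
    case True
    have "(\<lambda>k. E $$ (i,j) - (\<Sum>l<N. Xs k $$(i,l) * jd m l * Xs k $$(j,l))) \<longlonglongrightarrow> E $$ (i,j) - (\<Sum>l<N. Xlim $$(i,l) * jd m l * Xlim $$(j,l))"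
      by (rule tendsto_diff[OF tendsto_const S])
    thus ?thesis unfolding Phi_index[OF ij] using True by simp
  next
    case False
    show ?thesis
    proof (cases "i = j")
      case True
      have "(\<lambda>k. (E $$ (i,j) - (\<Sum>l<N. Xs k $$(i,l) * jd m l * Xs k $$(j,l))) / 2) \<longlonglongrightarrow> (E $$ (i,j) - (\<Sum>l<N. Xlim $$(i,l) * jd m l * Xlim $$(j,l))) / 2"
        by (rule tendsto_divide[OF tendsto_diff[OF tendsto_const S] tendsto_const]) simp
      thus ?thesis unfolding Phi_index[OF ij] using True False by simp
    next
      case False thus ?thesis unfolding Phi_index[OF ij] using \<open>\<not> j < i\<close> by simp
    qed
  qed
  have L2: "(\<lambda>k. Phi (Xs k) $$ (i,j)) \<longlonglongrightarrow> Xlim $$ (i,j)"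
    using LIMSEQ_Suc[OF Xs_lim[OF ij]] by (simp add: Xs_Suc)
  show "Phi Xlim $$ (i,j) = Xlim $$ (i,j)" using LIMSEQ_unique[OF L1 L2] .
qed auto

lemma Xlim_frob: "frob_norm Xlim \<le> \<rho>"
proof -
  have "(\<lambda>k. sqrt (\<Sum>i<N. \<Sum>j<N. (Xs k $$ (i,j))\<^sup>2)) \<longlonglongrightarrow> sqrt (\<Sum>i<N. \<Sum>j<N. (Xlim $$ (i,j))\<^sup>2)"
    by (intro tendsto_real_sqrt tendsto_sum tendsto_power Xs_lim) auto
  hence "(\<lambda>k. frob_norm (Xs k)) \<longlonglongrightarrow> frob_norm Xlim" by (simp add: frob_norm_def)
  thus ?thesis by (rule LIMSEQ_le_const2) (use Xs_frob in auto)
qed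

lemma solve: "\<exists>X\<in>carrier_mat N N. (\<forall>i<N. \<forall>j<N. i < j \<longrightarrow> X$$(i,j) = 0) \<and> frob_norm X \<le> \<rho> \<and>
   (\<forall>i<N. \<forall>j<N. X$$(i,j) + X$$(j,i) + (\<Sum>k<N. X$$(i,k) * jd m k * X$$(j,k)) = E$$(i,j))"
proof (intro bexI conjI allI impI)
  let ?X = Xlim
  define S where "S i j = (\<Sum>k<N. ?X$$(i,k) * jd m k * ?X$$(j,k))" for i j
  have ent: "?X $$ (i,j) = (if j < i then E $$ (i,j) - S i j
            else if i = j then (E $$ (i,j) - S i j) / 2 else 0)" if "i < N" "j < N" for i j
  proof -
    have "?X $$ (i,j) = Phi ?X $$ (i,j)" using Xlim_fix by simp
    also have "\<dots> = (if j < i then E $$ (i,j) - S i j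
            else if i = j then (E $$ (i,j) - S i j) / 2 else 0)"
      unfolding Phi_index[OF that] S_def ..
    finally show ?thesis .
  qed
  have sq: "S i j = S j i" for i j unfolding S_def
    by (auto intro!: sum.cong simp: mult_ac)
  fix i j assume ij: "i < N" "j < N"
  {
    assume "i < j" thus "?X $$ (i,j) = 0" using ent[OF ij] by simp
  }
  have goal: "?X$$(i,j) + ?X$$(j,i) + S i j = E$$(i,j)"
  proof (cases "j < i")
    case True
    have a: "?X$$(i,j) = E $$ (i,j) - S i j" using ent[OF ij] True by simp
    have b: "?X$$(j,i) = 0" using ent[OF ij(2,1)] True by simp
    show ?thesis unfolding a b by simp
  next
    case False
    show ?thesis
    proof (cases "i = j")
      case True
      have a: "?X$$(i,i) = (E $$ (i,i) - S i i) / 2" using ent[OF ij(1) ij(1)] by simp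
      show ?thesis unfolding True[symmetric] a by simp
    next
      case False
      with \<open>\<not> j < i\<close> have lt: "i < j" by simp
      have a: "?X$$(j,i) = E $$ (j,i) - S j i" using ent[OF ij(2,1)] lt by simp
      have b: "?X$$(i,j) = 0" using ent[OF ij] lt by simp
      show ?thesis unfolding a b sq[of j i] Esym[OF ij] by simp
    qed
  qed
  thus "?X$$(i,j) + ?X$$(j,i) + (\<Sum>k<N. ?X$$(i,k) * jd m k * ?X$$(j,k)) = E$$(i,j)"
    unfolding S_def .
qed (auto simp: Xlim_frob)

end


lemma frob_transpose: "frob_norm (transpose_mat A) = frob_norm A"
  unfolding frob_norm_def by (simp add: sum.swap[of _ "{..<dim_row A}"])

lemma vnorm2_sq: fixes v :: "real vec" assumes "v \<in> carrier_vec k" shows "(vnorm2 v)\<^sup>2 = (\<Sum>i<k. (v $ i)\<^sup>2)"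
proof -
  have eq: "scalar_prod v v = (\<Sum>i<k. (v $ i)\<^sup>2)" using assms
    by (simp add: scalar_prod_def power2_eq_square atLeast0LessThan)
  have "0 \<le> scalar_prod v v" unfolding scalar_prod_def by (rule sum_nonneg) simp
  thus ?thesis using eq by (simp add: vnorm2_def)
qed

lemma vnorm2_nonneg[simp]: "0 \<le> vnorm2 v"
proof -
  have "0 \<le> scalar_prod v v" unfolding scalar_prod_def by (rule sum_nonneg) simp
  thus ?thesis by (simp add: vnorm2_def)
qed

lemma mv_frob: assumes M: "M \<in> carrier_mat k k" and v: "v \<in> carrier_vec k"
  shows "vnorm2 (M *\<^sub>v v) \<le> frob_norm M * vnorm2 v"
proof -
  define r where "r i = (\<Sum>l<k. (M$$(i,l))\<^sup>2)" for i
  have ent: "((M *\<^sub>v v) $ i)\<^sup>2 \<le> r i * (vnorm2 v)\<^sup>2" if "i < k" for i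
  proof -
    have e: "(M *\<^sub>v v) $ i = (\<Sum>l<k. M$$(i,l) * v$l)" using M v that
      by (simp add: scalar_prod_def atLeast0LessThan)
    have "\<bar>\<Sum>l<k. M$$(i,l) * v$l\<bar> \<le> (\<Sum>l<k. \<bar>M$$(i,l)\<bar> * \<bar>v$l\<bar>)"
      by (rule order_trans[OF sum_abs]) (simp add: abs_mult)
    also have "\<dots> \<le> L2_set (\<lambda>l. M$$(i,l)) {..<k} * L2_set (\<lambda>l. v$l) {..<k}"
      by (rule L2_set_mult_ineq)
    finally have h: "\<bar>\<Sum>l<k. M$$(i,l) * v$l\<bar> \<le> L2_set (\<lambda>l. M$$(i,l)) {..<k} * L2_set (\<lambda>l. v$l) {..<k}" .
    have "(\<Sum>l<k. M$$(i,l) * v$l)\<^sup>2 \<le> (L2_set (\<lambda>l. M$$(i,l)) {..<k} * L2_set (\<lambda>l. v$l) {..<k})\<^sup>2"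
      using power_mono[OF h abs_ge_zero, of 2] by simp
    also have "\<dots> = r i * (vnorm2 v)\<^sup>2" unfolding r_def vnorm2_sq[OF v] L2_set_def power_mult_distrib
      by (simp add: sum_nonneg)
    finally show ?thesis unfolding e .
  qed
  have "(vnorm2 (M *\<^sub>v v))\<^sup>2 = (\<Sum>i<k. ((M *\<^sub>v v) $ i)\<^sup>2)" by (rule vnorm2_sq) (use M v in simp)
  also have "\<dots> \<le> (\<Sum>i<k. r i * (vnorm2 v)\<^sup>2)" by (rule sum_mono) (simp add: ent)
  also have "\<dots> = (frob_norm M * vnorm2 v)\<^sup>2"
    using M by (simp add: frob_norm_def r_def power_mult_distrib sum_distrib_right sum_nonneg)
  finally show ?thesis using power2_le_imp_le[of "vnorm2 (M *\<^sub>v v)"] by (simp add: mult_nonneg_nonneg)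
qed

lemma spec_bound: assumes M: "M \<in> carrier_mat k k" and v: "v \<in> carrier_vec k"
  shows "vnorm2 (M *\<^sub>v v) \<le> spec_norm M * vnorm2 v"
proof (cases "vnorm2 v = 0")
  case True
  hence "(\<Sum>i<k. (v $ i)\<^sup>2) = 0" using vnorm2_sq[OF v] by simp
  hence "\<forall>i\<in>{..<k}. (v $ i)\<^sup>2 = 0" by (subst (asm) sum_nonneg_eq_0_iff) auto
  hence "v = 0\<^sub>v k" using v by (intro eq_vecI) auto
  moreover have "M *\<^sub>v 0\<^sub>v k = 0\<^sub>v k" by (rule eq_vecI) (use M in \<open>auto simp: scalar_prod_def\<close>)
  ultimately show ?thesis using True by (simp add: vnorm2_def)
next
  case False
  define r where "r = vnorm2 v"
  have r0: "0 < r" using False vnorm2_nonneg[of v] unfolding r_def by linarith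
  define w where "w = (1/r) \<cdot>\<^sub>v v"
  have w: "w \<in> carrier_vec k" using v by (simp add: w_def)
  have vw: "vnorm2 (a \<cdot>\<^sub>v u) = \<bar>a\<bar> * vnorm2 u" for a and u :: "real vec"
  proof -
    have "scalar_prod (a \<cdot>\<^sub>v u) (a \<cdot>\<^sub>v u) = (a * a) * scalar_prod u u" by simp
    thus ?thesis by (simp add: vnorm2_def real_sqrt_mult)
  qed
  have w1: "vnorm2 w = 1" using r0 by (simp add: w_def vw r_def[symmetric])
  have Mw: "M *\<^sub>v w = (1/r) \<cdot>\<^sub>v (M *\<^sub>v v)" unfolding w_def by (rule mult_mat_vec[OF M v])
  have "vnorm2 (M *\<^sub>v w) \<in> {vnorm2 (M *\<^sub>v x) | x. x \<in> carrier_vec (dim_col M) \<and> vnorm2 x = 1}"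
    using w w1 M by auto
  moreover have "bdd_above {vnorm2 (M *\<^sub>v x) | x. x \<in> carrier_vec (dim_col M) \<and> vnorm2 x = 1}"
  proof (rule bdd_aboveI)
    fix y assume "y \<in> {vnorm2 (M *\<^sub>v x) | x. x \<in> carrier_vec (dim_col M) \<and> vnorm2 x = 1}"
    then obtain x where "x \<in> carrier_vec k" "vnorm2 x = 1" "y = vnorm2 (M *\<^sub>v x)" using M by auto
    thus "y \<le> frob_norm M" using mv_frob[OF M, of x] by simp
  qed
  ultimately have "vnorm2 (M *\<^sub>v w) \<le> spec_norm M" unfolding spec_norm_def by (rule cSup_upper)
  hence "vnorm2 (M *\<^sub>v v) / r \<le> spec_norm M" using r0 by (simp add: Mw vw)
  thus ?thesis using r0 by (simp add: r_def[symmetric] pos_divide_le_eq)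
qed

lemma frob_col: assumes "A \<in> carrier_mat k c"
  shows "(frob_norm A)\<^sup>2 = (\<Sum>j<c. (vnorm2 (col A j))\<^sup>2)"
proof -
  have "(frob_norm A)\<^sup>2 = (\<Sum>i<k. \<Sum>j<c. (A $$ (i,j))\<^sup>2)" using assms
    by (simp add: frob_norm_def sum_nonneg)
  also have "\<dots> = (\<Sum>j<c. \<Sum>i<k. (A $$ (i,j))\<^sup>2)" by (rule sum.swap)
  also have "\<dots> = (\<Sum>j<c. (vnorm2 (col A j))\<^sup>2)"
    using assms by (intro sum.cong refl) (simp add: vnorm2_sq[of _ k])
  finally show ?thesis .
qed

lemma frob_mult_spec: assumes M: "M \<in> carrier_mat k k" and A: "A \<in> carrier_mat k c"
  shows "(frob_norm (M * A))\<^sup>2 \<le> (spec_norm M)\<^sup>2 * (frob_norm A)\<^sup>2"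
proof -
  have "(frob_norm (M * A))\<^sup>2 = (\<Sum>j<c. (vnorm2 (col (M * A) j))\<^sup>2)"
    by (rule frob_col[of _ k c]) (use M A in simp)
  also have "\<dots> = (\<Sum>j<c. (vnorm2 (M *\<^sub>v col A j))\<^sup>2)"
    by (intro sum.cong refl) (subst col_mult2[OF M A], auto)
  also have "\<dots> \<le> (\<Sum>j<c. (spec_norm M)\<^sup>2 * (vnorm2 (col A j))\<^sup>2)"
  proof (rule sum_mono)
    fix j assume "j \<in> {..<c}"
    hence cj: "col A j \<in> carrier_vec k" using A by auto
    have "vnorm2 (M *\<^sub>v col A j) \<le> spec_norm M * vnorm2 (col A j)" by (rule spec_bound[OF M cj])
    from power_mono[OF this vnorm2_nonneg, of 2]
    show "(vnorm2 (M *\<^sub>v col A j))\<^sup>2 \<le> (spec_norm M)\<^sup>2 * (vnorm2 (col A j))\<^sup>2"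
      by (simp add: power_mult_distrib)
  qed
  also have "\<dots> = (spec_norm M)\<^sup>2 * (frob_norm A)\<^sup>2" using A by (simp add: frob_col sum_distrib_left)
  finally show ?thesis .
qed

lemma frob_sandwich: assumes M: "M \<in> carrier_mat k k" and D: "D \<in> carrier_mat k k"
  shows "frob_norm (M * D * transpose_mat M) \<le> (spec_norm M)\<^sup>2 * frob_norm D"
proof -
  have "M * D * transpose_mat M = M * (D * transpose_mat M)" using M D by simp
  hence "(frob_norm (M * D * transpose_mat M))\<^sup>2 \<le> (spec_norm M)\<^sup>2 * (frob_norm (D * transpose_mat M))\<^sup>2"
    using frob_mult_spec[OF M, of "D * transpose_mat M" k] M D by simp
  also have "frob_norm (D * transpose_mat M) = frob_norm (M * transpose_mat D)"
    using frob_transpose[of "D * transpose_mat M"] transpose_mult[OF D, of "transpose_mat M" k] M by simp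
  also have "(spec_norm M)\<^sup>2 * (frob_norm (M * transpose_mat D))\<^sup>2 \<le> (spec_norm M)\<^sup>2 * ((spec_norm M)\<^sup>2 * (frob_norm (transpose_mat D))\<^sup>2)"
    using frob_mult_spec[OF M, of "transpose_mat D" k] D by (intro mult_left_mono) auto
  finally have "(frob_norm (M * D * transpose_mat M))\<^sup>2 \<le> ((spec_norm M)\<^sup>2 * frob_norm D)\<^sup>2"
    by (simp add: frob_transpose power_mult_distrib)
  thus ?thesis by (rule power2_le_imp_le) simp
qed

lemma invertible_det: fixes A :: "real mat" assumes A: "A \<in> carrier_mat k k"
  shows "invertible_mat A \<longleftrightarrow> det A \<noteq> 0"
proof
  assume "invertible_mat A"
  then obtain B where AB: "A * B = 1\<^sub>m k" and BA: "B * A = 1\<^sub>m (dim_row B)"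
    using A unfolding invertible_mat_def inverts_mat_def by auto
  have "dim_col (B * A) = dim_row B" using BA by simp
  hence rB: "dim_row B = k" using A by simp
  have "dim_col B = k" using arg_cong[OF AB, of dim_col] by simp
  hence B: "B \<in> carrier_mat k k" using rB by auto
  have "det A * det B = 1" using det_mult[OF A B] AB by simp
  thus "det A \<noteq> 0" by auto
next
  assume "det A \<noteq> 0"
  from det_non_zero_imp_unit[OF A this, of "()"]
  obtain B where B: "B \<in> carrier_mat k k" and "B * A = 1\<^sub>m k" "A * B = 1\<^sub>m k"
    unfolding Units_def ring_mat_def by auto
  thus "invertible_mat A" using A unfolding invertible_mat_def inverts_mat_def
    by (auto intro!: exI[of _ B])
qed

lemma lt_invertible: fixes A :: "real mat" assumes A: "A \<in> carrier_mat k k"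
  and lt: "\<And>i j. i < k \<Longrightarrow> j < k \<Longrightarrow> i < j \<Longrightarrow> A $$ (i,j) = 0"
  shows "invertible_mat A \<longleftrightarrow> (\<forall>i<k. A $$ (i,i) \<noteq> 0)"
proof -
  have "det A = prod_list (diag_mat A)" by (rule det_lower_triangular[OF _ A]) (use lt in auto)
  also have "\<dots> = (\<Prod>i = 0 ..< k. A $$ (i,i))" using A by (simp add: prod_list_diag_prod)
  finally have "det A \<noteq> 0 \<longleftrightarrow> (\<forall>i<k. A $$ (i,i) \<noteq> 0)" by auto
  thus ?thesis using invertible_det[OF A] by simp
qed


lemma mult_Jsig_entry: assumes A: "A \<in> carrier_mat (m+n) (m+n)" and i: "i < m+n" and k: "k < m+n"
  shows "(A * Jsig m n) $$ (i,k) = A$$(i,k) * jd m k"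
proof -
  have "(A * Jsig m n) $$ (i,k) = (\<Sum>l<m+n. A$$(i,l) * Jsig m n $$ (l,k))"
    using A i k by (simp add: scalar_prod_def atLeast0LessThan)
  also have "\<dots> = (\<Sum>l<m+n. if l = k then A$$(i,k) * jd m k else 0)"
    by (intro sum.cong refl) (auto simp: Jsig_index k)
  also have "\<dots> = A$$(i,k) * jd m k" using k by simp
  finally show ?thesis .
qed

lemma AJAt_entry: assumes A: "A \<in> carrier_mat (m+n) (m+n)" and i: "i < m+n" and j: "j < m+n"
  shows "(A * Jsig m n * transpose_mat A) $$ (i,j) = (\<Sum>k<m+n. A$$(i,k) * jd m k * A$$(j,k))"
proof -
  have "(A * Jsig m n * transpose_mat A) $$ (i,j) = (\<Sum>k<m+n. (A * Jsig m n) $$ (i,k) * transpose_mat A $$ (k,j))"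
    using A i j by (simp add: scalar_prod_def atLeast0LessThan)
  also have "\<dots> = (\<Sum>k<m+n. A$$(i,k) * jd m k * A$$(j,k))"
  proof (rule sum.cong[OF refl])
    fix k assume k: "k \<in> {..<m+n}"
    show "(A * Jsig m n) $$ (i,k) * transpose_mat A $$ (k,j) = A$$(i,k) * jd m k * A$$(j,k)"
      by (subst mult_Jsig_entry[OF A i]) (use A j k in auto)
  qed
  finally show ?thesis .
qed

lemma lt_mult: assumes A: "A \<in> carrier_mat k k" and B: "B \<in> carrier_mat k k"
  and lA: "\<And>i j. i < k \<Longrightarrow> j < k \<Longrightarrow> i < j \<Longrightarrow> A $$ (i,j) = 0"
  and lB: "\<And>i j. i < k \<Longrightarrow> j < k \<Longrightarrow> i < j \<Longrightarrow> B $$ (i,j) = 0"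
  shows "\<And>i j. i < k \<Longrightarrow> j < k \<Longrightarrow> i < j \<Longrightarrow> (A * B) $$ (i,j) = 0"
    and "\<And>i. i < k \<Longrightarrow> (A * B) $$ (i,i) = A $$ (i,i) * B $$ (i,i)"
proof -
  have ent: "(A * B) $$ (i,j) = (\<Sum>l<k. A$$(i,l) * B$$(l,j))" if "i < k" "j < k" for i j
    using A B that by (simp add: scalar_prod_def atLeast0LessThan)
  fix i j assume ij: "i < k" "j < k" "i < j"
  have "(\<Sum>l<k. A$$(i,l) * B$$(l,j)) = 0"
  proof (rule sum.neutral, rule ballI)
    fix l assume l: "l \<in> {..<k}"
    show "A$$(i,l) * B$$(l,j) = 0"
    proof (cases "l \<le> i")
      case True thus ?thesis using lB[of l j] l ij by auto
    next
      case False thus ?thesis using lA[of i l] l ij by auto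
    qed
  qed
  thus "(A * B) $$ (i,j) = 0" using ent ij by simp
next
  have ent: "(A * B) $$ (i,j) = (\<Sum>l<k. A$$(i,l) * B$$(l,j))" if "i < k" "j < k" for i j
    using A B that by (simp add: scalar_prod_def atLeast0LessThan)
  fix i assume i: "i < k"
  have "(\<Sum>l<k. A$$(i,l) * B$$(l,i)) = (\<Sum>l<k. if l = i then A$$(i,i) * B$$(i,i) else 0)"
  proof (rule sum.cong[OF refl])
    fix l assume l: "l \<in> {..<k}"
    show "A$$(i,l) * B$$(l,i) = (if l = i then A$$(i,i) * B$$(i,i) else 0)"
    proof (cases "l < i")
      case True thus ?thesis using lB[of l i] l i by auto
    next
      case False thus ?thesis using lA[of i l] l i by (cases "l = i") auto
    qed
  qed
  also have "\<dots> = A$$(i,i) * B$$(i,i)" using i by simp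
  finally show "(A * B) $$ (i,i) = A $$ (i,i) * B $$ (i,i)" using ent[OF i i] by simp
qed

lemma blocks_inv: fixes Q :: "real mat" assumes Q: "Q \<in> carrier_mat (m+n) (m+n)"
  and lt: "\<And>i j. i < m+n \<Longrightarrow> j < m+n \<Longrightarrow> i < j \<Longrightarrow> Q $$ (i,j) = 0"
  shows "(invertible_mat (mat m m (\<lambda>(i,j). Q $$ (i,j))) \<and> invertible_mat (mat n n (\<lambda>(i,j). Q $$ (m+i,m+j))))
     \<longleftrightarrow> (\<forall>i<m+n. Q$$(i,i) \<noteq> 0)"
proof -
  have 1: "invertible_mat (mat m m (\<lambda>(i,j). Q $$ (i,j))) \<longleftrightarrow> (\<forall>i<m. Q$$(i,i) \<noteq> 0)"
    by (subst lt_invertible[of _ m]) (auto intro: lt)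
  have 2: "invertible_mat (mat n n (\<lambda>(i,j). Q $$ (m+i,m+j))) \<longleftrightarrow> (\<forall>i<n. Q$$(m+i,m+i) \<noteq> 0)"
    by (subst lt_invertible[of _ n]) (auto intro: lt)
  have 3: "((\<forall>i<m. Q$$(i,i) \<noteq> 0) \<and> (\<forall>i<n. Q$$(m+i,m+i) \<noteq> 0)) \<longleftrightarrow> (\<forall>i<m+n. Q$$(i,i) \<noteq> 0)"
  proof
    assume h: "(\<forall>i<m. Q$$(i,i) \<noteq> 0) \<and> (\<forall>i<n. Q$$(m+i,m+i) \<noteq> 0)"
    show "\<forall>i<m+n. Q$$(i,i) \<noteq> 0"
    proof (intro allI impI)
      fix i assume i: "i < m+n"
      show "Q$$(i,i) \<noteq> 0"
      proof (cases "i < m")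
        case True thus ?thesis using h by auto
      next
        case False
        hence "i = m + (i - m)" "i - m < n" using i by auto
        thus ?thesis using h by metis
      qed
    qed
  qed auto
  show ?thesis using 1 2 3 by simp
qed

lemma expand_pt: fixes x y d :: real assumes d: "d = 1 \<or> d = -1"
  shows "((if i = k then 1 else 0) + x * d) * d * ((if j = k then 1 else 0) + y * d)
     = (if i = k \<and> j = k then d else 0) + (if i = k then y else 0) + (if j = k then x else 0) + x * d * y"
  using d by (cases "i = k"; cases "j = k") (auto simp: algebra_simps)

lemma jd_cases: "jd m k = 1 \<or> jd m k = -1" by (simp add: jd_def)


theorem mainTheorem2:
  fixes m n :: nat and A B C L \<Delta>K :: "real mat"
  assumes A: "A \<in> carrier_mat m m" "pos_def_mat A"
    and B: "B \<in> carrier_mat n m" "mat_rank B = n"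
    and C: "C \<in> carrier_mat n n" "pos_semidef_mat C"
    and L: "gen_cholesky m n (four_block_mat A (transpose_mat B) B (- C)) L"
    and dK: "\<Delta>K \<in> carrier_mat (m+n) (m+n)" "sym_mat \<Delta>K"
    and small: "(spec_norm (mat_inv L))\<^sup>2 * frob_norm \<Delta>K < 1/2"
  shows "\<exists>\<Delta>L \<in> carrier_mat (m+n) (m+n).
           gen_cholesky m n (four_block_mat A (transpose_mat B) B (- C) + \<Delta>K) (L + \<Delta>L) \<and>
           frob_norm (mat_inv L * \<Delta>L)
             \<le> (1 / sqrt 2) * (1 - sqrt (1 - 2 * (spec_norm (mat_inv L))\<^sup>2 * frob_norm \<Delta>K))"
proof -
  define K where "K = four_block_mat A (transpose_mat B) B (- C)"
  define J where "J = Jsig m n"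
  have Jc: "J \<in> carrier_mat (m+n) (m+n)" by (simp add: J_def)
  have Lc: "L \<in> carrier_mat (m+n) (m+n)" and Llt: "lower_tri L"
    and I1: "invertible_mat (mat m m (\<lambda>(i,j). L $$ (i,j)))"
    and I2: "invertible_mat (mat n n (\<lambda>(i,j). L $$ (m+i, m+j)))"
    and KL: "K = L * J * transpose_mat L"
    using L unfolding gen_cholesky_def K_def J_def by auto
  have Llt': "L $$ (i,j) = 0" if "i < m+n" "j < m+n" "i < j" for i j
    using Llt Lc that unfolding lower_tri_def by auto
  have Ldiag: "\<forall>i<m+n. L$$(i,i) \<noteq> 0" using blocks_inv[OF Lc Llt'] I1 I2 by blast
  have Linv: "invertible_mat L" using lt_invertible[OF Lc Llt'] Ldiag by simp
  define M where "M = mat_inv L"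
  have Mprops: "M \<in> carrier_mat (m+n) (m+n) \<and> L * M = 1\<^sub>m (m+n) \<and> M * L = 1\<^sub>m (m+n)"
  proof -
    obtain B' where AB: "L * B' = 1\<^sub>m (m+n)" and BA: "B' * L = 1\<^sub>m (dim_row B')"
      using Linv Lc unfolding invertible_mat_def inverts_mat_def by auto
    have "dim_col (B' * L) = dim_row B'" using BA by simp
    hence rB: "dim_row B' = m+n" using Lc by simp
    have "dim_col B' = m+n" using arg_cong[OF AB, of dim_col] by simp
    hence "B' \<in> carrier_mat (m+n) (m+n) \<and> L * B' = 1\<^sub>m (m+n) \<and> B' * L = 1\<^sub>m (m+n)"
      using rB AB BA by auto
    hence ex: "\<exists>B. B \<in> carrier_mat (dim_row L) (dim_row L) \<and> L * B = 1\<^sub>m (dim_row L) \<and> B * L = 1\<^sub>m (dim_row L)"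
      using Lc by auto
    show ?thesis using someI_ex[OF ex] Lc unfolding M_def mat_inv_def by simp
  qed
  hence Mc: "M \<in> carrier_mat (m+n) (m+n)" and LMi: "L * M = 1\<^sub>m (m+n)" and MLi: "M * L = 1\<^sub>m (m+n)" by auto
  define E where "E = M * \<Delta>K * transpose_mat M"
  define \<epsilon> where "\<epsilon> = (spec_norm M)\<^sup>2 * frob_norm \<Delta>K"
  have Ec: "E \<in> carrier_mat (m+n) (m+n)" using Mc dK by (simp add: E_def)
  have dKt: "transpose_mat \<Delta>K = \<Delta>K" using dK unfolding sym_mat_def by auto
  have Et: "transpose_mat E = E"
  proof -
    have "transpose_mat E = transpose_mat (transpose_mat M) * transpose_mat (M * \<Delta>K)"
      unfolding E_def by (rule transpose_mult[of _ "m+n" "m+n" _ "m+n"]) (use Mc dK in auto)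
    also have "transpose_mat (M * \<Delta>K) = transpose_mat \<Delta>K * transpose_mat M"
      by (rule transpose_mult[of _ "m+n" "m+n" _ "m+n"]) (use Mc dK in auto)
    finally show ?thesis unfolding E_def dKt using Mc dK by simp
  qed
  have Esym: "E $$ (i,j) = E $$ (j,i)" if "i < m+n" "j < m+n" for i j
  proof -
    have "E $$ (i,j) = transpose_mat E $$ (i,j)" by (simp add: Et)
    also have "\<dots> = E $$ (j,i)" using Ec that by simp
    finally show ?thesis .
  qed
  have Eb: "frob_norm E \<le> \<epsilon>" unfolding E_def \<epsilon>_def by (rule frob_sandwich[OF Mc dK(1)])
  have eps: "\<epsilon> < 1/2" using small by (simp add: \<epsilon>_def M_def)
  interpret F: fpset "m+n" m E \<epsilon>
    by unfold_locales (use Ec Esym Eb eps in auto)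
  obtain X where Xc: "X \<in> carrier_mat (m+n) (m+n)"
    and Xlt: "\<forall>i<m+n. \<forall>j<m+n. i < j \<longrightarrow> X$$(i,j) = 0"
    and Xb: "frob_norm X \<le> F.\<rho>"
    and Xeq: "\<forall>i<m+n. \<forall>j<m+n. X$$(i,j) + X$$(j,i) + (\<Sum>k<m+n. X$$(i,k) * jd m k * X$$(j,k)) = E$$(i,j)"
    using F.solve by blast
  have rho_eq: "F.\<rho> = (1 / sqrt 2) * (1 - sqrt (1 - 2 * (spec_norm (mat_inv L))\<^sup>2 * frob_norm \<Delta>K))"
    unfolding F.\<rho>_def by (simp add: \<epsilon>_def M_def mult.assoc)
  have rho_lt1: "F.\<rho> < 1"
  proof -
    have "1 * F.\<rho> \<le> sqrt 2 * F.\<rho>" using F.rho_facts(1) by (intro mult_right_mono) auto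
    thus ?thesis using F.rho_facts(3) by simp
  qed
  define G where "G = mat (m+n) (m+n) (\<lambda>(i,j). X$$(i,j) * jd m j)"
  define P where "P = 1\<^sub>m (m+n) + G"
  define \<Delta>L where "\<Delta>L = L * G"
  have Gc: "G \<in> carrier_mat (m+n) (m+n)" by (simp add: G_def)
  have Pc: "P \<in> carrier_mat (m+n) (m+n)" by (simp add: P_def G_def)
  have dLc: "\<Delta>L \<in> carrier_mat (m+n) (m+n)" using Lc Gc by (simp add: \<Delta>L_def)
  have P_ent: "P $$ (i,j) = (if i = j then 1 else 0) + X$$(i,j) * jd m j" if "i < m+n" "j < m+n" for i j
    using that by (simp add: P_def G_def)
  have Plt: "P $$ (i,j) = 0" if "i < m+n" "j < m+n" "i < j" for i j
    using that Xlt by (simp add: P_ent)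
  have Pdiag: "P $$ (i,i) \<noteq> 0" if "i < m+n" for i
  proof
    assume "P $$ (i,i) = 0"
    hence "X$$(i,i) * jd m i = -1" using P_ent[OF that that] by simp
    hence "\<bar>X$$(i,i)\<bar> = 1" using jd_cases[of m i] by auto
    moreover have "\<bar>X$$(i,i)\<bar> \<le> frob_norm X" by (rule frob_entry) (use Xc that in auto)
    ultimately show False using Xb rho_lt1 by linarith
  qed
  have LP: "L + \<Delta>L = L * P"
    unfolding P_def \<Delta>L_def using mult_add_distrib_mat[OF Lc one_carrier_mat Gc] right_mult_one_mat[OF Lc] by simp
  have PJP: "P * J * transpose_mat P = J + E"
  proof (rule eq_matI)
    fix i j assume "i < dim_row (J + E)" "j < dim_col (J + E)"
    hence ij: "i < m+n" "j < m+n" using Ec by auto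
    have "(P * J * transpose_mat P) $$ (i,j) = (\<Sum>k<m+n. P$$(i,k) * jd m k * P$$(j,k))"
      unfolding J_def by (rule AJAt_entry[OF Pc ij])
    also have "\<dots> = (\<Sum>k<m+n. (if i = k \<and> j = k then jd m k else 0) + (if i = k then X$$(j,k) else 0)
        + (if j = k then X$$(i,k) else 0) + X$$(i,k) * jd m k * X$$(j,k))"
    proof (rule sum.cong[OF refl])
      fix k assume k: "k \<in> {..<m+n}"
      show "P$$(i,k) * jd m k * P$$(j,k) = (if i = k \<and> j = k then jd m k else 0) + (if i = k then X$$(j,k) else 0)
        + (if j = k then X$$(i,k) else 0) + X$$(i,k) * jd m k * X$$(j,k)"
        using k ij by (simp only: P_ent lessThan_iff expand_pt[OF jd_cases])
    qed
    also have "\<dots> = (\<Sum>k<m+n. (if i = k \<and> j = k then jd m k else 0)) + (\<Sum>k<m+n. (if i = k then X$$(j,k) else 0))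
        + (\<Sum>k<m+n. (if j = k then X$$(i,k) else 0)) + (\<Sum>k<m+n. X$$(i,k) * jd m k * X$$(j,k))"
      by (simp add: sum.distrib)
    also have "(\<Sum>k<m+n. (if i = k \<and> j = k then jd m k else 0)) = (if i = j then jd m i else 0)"
      using ij by (cases "i = j") auto
    also have "(\<Sum>k<m+n. (if i = k then X$$(j,k) else 0)) = X$$(j,i)" using ij by simp
    also have "(\<Sum>k<m+n. (if j = k then X$$(i,k) else 0)) = X$$(i,j)" using ij by simp
    finally have "(P * J * transpose_mat P) $$ (i,j) = (if i = j then jd m i else 0) + E$$(i,j)"
      using Xeq ij by (simp add: algebra_simps)
    thus "(P * J * transpose_mat P) $$ (i,j) = (J + E) $$ (i,j)"
      using ij Ec by (simp add: J_def Jsig_index)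
  qed (use Pc Ec Jc in auto)
  have Lt: "transpose_mat L \<in> carrier_mat (m+n) (m+n)" and Pt: "transpose_mat P \<in> carrier_mat (m+n) (m+n)"
    and Mt: "transpose_mat M \<in> carrier_mat (m+n) (m+n)" using Lc Pc Mc by auto
  have as: "X1 * X2 * X3 = X1 * (X2 * X3)" if "X1 \<in> carrier_mat (m+n) (m+n)" "X2 \<in> carrier_mat (m+n) (m+n)"
     "X3 \<in> carrier_mat (m+n) (m+n)" for X1 X2 X3 :: "real mat"
    using that by (rule assoc_mult_mat)
  have PJ: "P * J \<in> carrier_mat (m+n) (m+n)" using Pc Jc by simp
  have LP0: "L * P \<in> carrier_mat (m+n) (m+n)" using Lc Pc by simp
  have LPJ: "L * P * J \<in> carrier_mat (m+n) (m+n)" using LP0 Jc by simp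
  have eq1: "(L * P) * J * transpose_mat (L * P) = L * (P * J * transpose_mat P) * transpose_mat L"
  proof -
    have "(L * P) * J * transpose_mat (L * P) = (L * P) * J * (transpose_mat P * transpose_mat L)"
      by (simp add: transpose_mult[OF Lc Pc])
    also have "\<dots> = ((L * P) * J * transpose_mat P) * transpose_mat L" by (rule as[OF LPJ Pt Lt, symmetric])
    also have "((L * P) * J * transpose_mat P) * transpose_mat L = (L * (P * J) * transpose_mat P) * transpose_mat L"
      by (simp only: as[OF Lc Pc Jc])
    also have "\<dots> = L * (P * J * transpose_mat P) * transpose_mat L" by (simp only: as[OF Lc PJ Pt])
    finally show ?thesis .
  qed
  have eq2: "L * E * transpose_mat L = \<Delta>K"
  proof -
    have "L * E * transpose_mat L = (L * M) * \<Delta>K * (transpose_mat M * transpose_mat L)"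
      unfolding E_def using Lc Mc dK(1) Lt Mt by (simp add: as)
    also have "transpose_mat M * transpose_mat L = transpose_mat (L * M)"
      by (rule transpose_mult[OF Lc Mc, symmetric])
    finally show ?thesis using LMi dK by simp
  qed
  have eq3: "(L * P) * J * transpose_mat (L * P) = K + \<Delta>K"
  proof -
    have "(L * P) * J * transpose_mat (L * P) = L * (J + E) * transpose_mat L" unfolding eq1 PJP ..
    also have "L * (J + E) = L * J + L * E" by (rule mult_add_distrib_mat[OF Lc Jc Ec])
    also have "(L * J + L * E) * transpose_mat L = L * J * transpose_mat L + L * E * transpose_mat L"
      by (rule add_mult_distrib_mat[of _ "m+n" "m+n"]) (use Lc Jc Ec in auto)
    finally show ?thesis unfolding eq2 KL .
  qed
  have LPc: "L * P \<in> carrier_mat (m+n) (m+n)" using Lc Pc by simp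
  have LPlt: "(L * P) $$ (i,j) = 0" if "i < m+n" "j < m+n" "i < j" for i j
    using lt_mult(1)[OF Lc Pc Llt' Plt that] .
  have LPdiag: "\<forall>i<m+n. (L * P) $$ (i,i) \<noteq> 0"
    using lt_mult(2)[OF Lc Pc Llt' Plt] Ldiag Pdiag by simp
  have GC: "gen_cholesky m n (K + \<Delta>K) (L + \<Delta>L)"
    unfolding gen_cholesky_def LP
  proof (intro conjI)
    show "L * P \<in> carrier_mat (m+n) (m+n)" by (rule LPc)
    show "lower_tri (L * P)" unfolding lower_tri_def
    proof (intro allI impI)
      fix i j assume h: "i < dim_row (L * P)" "j < dim_col (L * P)" "i < j"
      have "dim_row (L * P) = m+n" "dim_col (L * P) = m+n" using LPc by auto
      thus "(L * P) $$ (i,j) = 0" using LPlt[of i j] h by simp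
    qed
    show "invertible_mat (mat m m (\<lambda>(i,j). (L * P) $$ (i,j)))"
      using blocks_inv[OF LPc LPlt] LPdiag by blast
    show "invertible_mat (mat n n (\<lambda>(i,j). (L * P) $$ (m+i, m+j)))"
      using blocks_inv[OF LPc LPlt] LPdiag by blast
    show "K + \<Delta>K = L * P * Jsig m n * transpose_mat (L * P)" using eq3 by (simp add: J_def)
  qed
  have MdL: "mat_inv L * \<Delta>L = G"
  proof -
    have "M * \<Delta>L = (M * L) * G" unfolding \<Delta>L_def using Mc Lc Gc by simp
    thus ?thesis using MLi Gc by (simp add: M_def)
  qed
  have fG: "frob_norm G = frob_norm X"
    unfolding frob_norm_def using Xc by (simp add: G_def power_mult_distrib)
  show ?thesis
  proof (rule bexI[OF _ dLc], intro conjI)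
    show "gen_cholesky m n (four_block_mat A (transpose_mat B) B (- C) + \<Delta>K) (L + \<Delta>L)"
      using GC by (simp add: K_def)
    show "frob_norm (mat_inv L * \<Delta>L) \<le> (1 / sqrt 2) * (1 - sqrt (1 - 2 * (spec_norm (mat_inv L))\<^sup>2 * frob_norm \<Delta>K))"
      unfolding MdL fG rho_eq[symmetric] by (rule Xb)
  qed
qed

end
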